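(* Let $\mathcal X$ be a subset of the nonzero elements of a field, let $g:\mathcal X\to\mathcal X$ be a bijection and $f:\mathcal X\times\mathcal X\to\mathcal X$ a function such that the map $S:\mathcal X^2\times\mathcal X^2\to\mathcal X^2\times\mathcal X^2$, $$S(x,X;y,Y)=(u,U;v,V)=\Big(g^{-1}\Big(\frac{g(x)}{f(v,V)}\Big),\;X\frac{f(y,Y)}{f(v,V)};\;g^{-1}\big(Xg(y)\big),\;XY\Big)$$ is well defined, and suppose that $f(u,U)f(v,V)=f(x,X)$ for all $(x,X;y,Y)$, where $(u,U;v,V)=S(x,X;y,Y)$. Then $S$ is a pentagon map.
   Context: Pentagon map: for a set $Y$ (here $Y=\mathcal X^2$) and $S:Y\times Y\to Y\times Y$, set $S_{12}=S\times\mathrm{id}_Y$, $S_{23}=\mathrm{id}_Y\times S$, $S_{13}(y_1,y_2,y_3)=(p,y_2,q)$ with $(p,q)=S(y_1,y_3)$; $S$ is a pentagon map if $S_{12}\circ S_{13}\circ S_{23}=S_{23}\circ S_{12}$ (rightmost applied first). *)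

theory Defs
  imports Main
begin

definition S12 :: "('y \<times> 'y \<Rightarrow> 'y \<times> 'y) \<Rightarrow> 'y \<times> 'y \<times> 'y \<Rightarrow> 'y \<times> 'y \<times> 'y" where
  "S12 S = (\<lambda>(y1, y2, y3). (fst (S (y1, y2)), snd (S (y1, y2)), y3))"

definition S23 :: "('y \<times> 'y \<Rightarrow> 'y \<times> 'y) \<Rightarrow> 'y \<times> 'y \<times> 'y \<Rightarrow> 'y \<times> 'y \<times> 'y" where
  "S23 S = (\<lambda>(y1, y2, y3). (y1, fst (S (y2, y3)), snd (S (y2, y3))))"

definition S13 :: "('y \<times> 'y \<Rightarrow> 'y \<times> 'y) \<Rightarrow> 'y \<times> 'y \<times> 'y \<Rightarrow> 'y \<times> 'y \<times> 'y" where
  "S13 S = (\<lambda>(y1, y2, y3). (fst (S (y1, y3)), y2, snd (S (y1, y3))))"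

definition pentagon_map_on :: "'y set \<Rightarrow> ('y \<times> 'y \<Rightarrow> 'y \<times> 'y) \<Rightarrow> bool" where
  "pentagon_map_on Y S \<longleftrightarrow>
     (\<forall>y1\<in>Y. \<forall>y2\<in>Y. \<forall>y3\<in>Y.
        S12 S (S13 S (S23 S (y1, y2, y3))) = S23 S (S12 S (y1, y2, y3)))"

definition Smap :: "'a set \<Rightarrow> ('a \<Rightarrow> 'a \<Rightarrow> 'a) \<Rightarrow> ('a \<Rightarrow> 'a::field)
                   \<Rightarrow> ('a \<times> 'a) \<times> ('a \<times> 'a) \<Rightarrow> ('a \<times> 'a) \<times> ('a \<times> 'a)" where
  "Smap Xs f g = (\<lambda>((x, X), (y, Y)).
     let v = inv_into Xs g (X * g y);
         V = X * Y
     in ((inv_into Xs g (g x / f v V), X * f y Y / f v V), (v, V)))"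

end

theory Submission
  imports Defs
begin

theorem mainTheorem7:
  fixes Xs :: "'a::field set"
    and f :: "'a \<Rightarrow> 'a \<Rightarrow> 'a"
    and g :: "'a \<Rightarrow> 'a"
  assumes nonzero: "0 \<notin> Xs"
    and g_bij: "bij_betw g Xs Xs"
    and f_maps: "\<And>x X. x \<in> Xs \<Longrightarrow> X \<in> Xs \<Longrightarrow> f x X \<in> Xs"
    and welldef: "\<And>x X y Y. x \<in> Xs \<Longrightarrow> X \<in> Xs \<Longrightarrow> y \<in> Xs \<Longrightarrow> Y \<in> Xs \<Longrightarrow>
        X * g y \<in> Xs \<and> X * Y \<in> Xs \<and>
        g x / f (inv_into Xs g (X * g y)) (X * Y) \<in> Xs \<and>
        X * f y Y / f (inv_into Xs g (X * g y)) (X * Y) \<in> Xs"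
    and f_rel: "\<And>x X y Y u U v V. x \<in> Xs \<Longrightarrow> X \<in> Xs \<Longrightarrow> y \<in> Xs \<Longrightarrow> Y \<in> Xs \<Longrightarrow>
        Smap Xs f g ((x, X), (y, Y)) = ((u, U), (v, V)) \<Longrightarrow>
        f u U * f v V = f x X"
  shows "pentagon_map_on (Xs \<times> Xs) (Smap Xs f g)"
  unfolding pentagon_map_on_def
proof (intro ballI)
  fix t1 t2 t3 assume t: "t1 \<in> Xs \<times> Xs" "t2 \<in> Xs \<times> Xs" "t3 \<in> Xs \<times> Xs"
  obtain x1 X1 x2 X2 x3 X3 where tt: "t1 = (x1,X1)" "t2 = (x2,X2)" "t3 = (x3,X3)"
    by (cases t1, cases t2, cases t3) auto
  have m: "x1 \<in> Xs" "X1 \<in> Xs" "x2 \<in> Xs" "X2 \<in> Xs" "x3 \<in> Xs" "X3 \<in> Xs" using t tt by auto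
  define h where "h = inv_into Xs g"
  have gh: "\<And>z. z \<in> Xs \<Longrightarrow> g (h z) = z" unfolding h_def
    by (metis bij_betw_def f_inv_into_f g_bij)
  have hin: "\<And>z. z \<in> Xs \<Longrightarrow> h z \<in> Xs" unfolding h_def
    by (metis bij_betw_def g_bij inv_into_into)
  have fnz: "\<And>x X. x \<in> Xs \<Longrightarrow> X \<in> Xs \<Longrightarrow> f x X \<noteq> 0" using f_maps nonzero by metis
  have Sm: "\<And>x X y Y. Smap Xs f g ((x,X),(y,Y)) =
     ((h (g x / f (h (X * g y)) (X * Y)), X * f y Y / f (h (X * g y)) (X * Y)), (h (X * g y), X * Y))"
    by (simp add: Smap_def Let_def h_def)
  note wd = welldef[folded h_def]
  define v12 where "v12 = h (X1 * g x2)"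
  define V12 where "V12 = X1 * X2"
  define a1 where "a1 = h (g x1 / f v12 V12)"
  define A1 where "A1 = X1 * f x2 X2 / f v12 V12"
  have bm: "v12 \<in> Xs" "V12 \<in> Xs" using wd[OF m(1-4)] hin unfolding v12_def V12_def by auto
  define w1 where "w1 = h (V12 * g x3)"
  define W1 where "W1 = V12 * X3"
  define m1 where "m1 = h (g v12 / f w1 W1)"
  define M1 where "M1 = V12 * f x3 X3 / f w1 W1"
  have wm: "w1 \<in> Xs" "W1 \<in> Xs" "m1 \<in> Xs" "M1 \<in> Xs"
    using wd[OF bm m(5,6)] hin unfolding w1_def W1_def m1_def M1_def by auto
  have gv: "g v12 = X1 * g x2" unfolding v12_def using wd[OF m(1-4)] gh by auto
  define d1 where "d1 = h (X2 * g x3)"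
  define D1 where "D1 = X2 * X3"
  define c1 where "c1 = h (g x2 / f d1 D1)"
  define C1 where "C1 = X2 * f x3 X3 / f d1 D1"
  have dm: "d1 \<in> Xs" "D1 \<in> Xs" "c1 \<in> Xs" "C1 \<in> Xs"
    using wd[OF m(3-6)] hin unfolding d1_def D1_def c1_def C1_def by auto
  have gd: "g d1 = X2 * g x3" unfolding d1_def using wd[OF m(3-6)] gh by auto
  have kw: "h (X1 * g d1) = w1" "X1 * D1 = W1"
    unfolding gd w1_def W1_def V12_def D1_def by (simp_all add: mult.assoc)
  define e1 where "e1 = h (g x1 / f w1 W1)"
  define E1 where "E1 = X1 * f d1 D1 / f w1 W1"
  have em: "e1 \<in> Xs" "E1 \<in> Xs"
    using wd[OF m(1,2) dm(1,2)] hin unfolding e1_def E1_def kw by auto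
  have ge: "g e1 = g x1 / f w1 W1"
    unfolding e1_def using wd[OF m(1,2) dm(1,2)] gh kw by auto
  have gc: "g c1 = g x2 / f d1 D1"
    unfolding c1_def using wd[OF m(3-6)] gh by (auto simp: d1_def D1_def)
  have fd: "f d1 D1 \<noteq> 0" "f w1 W1 \<noteq> 0" "f v12 V12 \<noteq> 0"
    using fnz dm wm bm by auto
  have q1: "h (E1 * g c1) = m1"
    unfolding m1_def gv gc E1_def using fd by (simp add: field_simps)
  have Q1: "E1 * C1 = M1"
    unfolding M1_def C1_def E1_def V12_def using fd by (simp add: field_simps)
  have r1: "f c1 C1 * f d1 D1 = f x2 X2"
    using f_rel[OF m(3-6)] Sm unfolding c1_def C1_def d1_def D1_def by auto
  have r2: "f m1 M1 * f w1 W1 = f v12 V12"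
    using f_rel[OF bm m(5,6)] Sm unfolding m1_def M1_def w1_def W1_def by auto
  have fm: "f m1 M1 \<noteq> 0" using fnz wm by auto
  have p1: "h (g e1 / f m1 M1) = a1"
    unfolding a1_def ge r2[symmetric] by (simp add: field_simps)
  have P1: "E1 * f c1 C1 / f m1 M1 = A1"
  proof -
    have "E1 * f c1 C1 / f m1 M1 = X1 * (f c1 C1 * f d1 D1) / (f m1 M1 * f w1 W1)"
      unfolding E1_def using fd fm by (simp add: field_simps)
    also have "\<dots> = A1" unfolding r1 r2 A1_def ..
    finally show ?thesis .
  qed
  have L: "Smap Xs f g ((x2,X2),(x3,X3)) = ((c1,C1),(d1,D1))"
    unfolding Sm c1_def C1_def d1_def D1_def ..
  have L2: "Smap Xs f g ((x1,X1),(d1,D1)) = ((e1,E1),(w1,W1))"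
    unfolding Sm kw e1_def E1_def ..
  have L3: "Smap Xs f g ((e1,E1),(c1,C1)) = ((a1,A1),(m1,M1))"
    unfolding Sm q1 Q1 p1 P1 ..
  have R1: "Smap Xs f g ((x1,X1),(x2,X2)) = ((a1,A1),(v12,V12))"
    unfolding Sm a1_def A1_def v12_def V12_def ..
  have R2: "Smap Xs f g ((v12,V12),(x3,X3)) = ((m1,M1),(w1,W1))"
    unfolding Sm m1_def M1_def w1_def W1_def ..
  show "S12 (Smap Xs f g) (S13 (Smap Xs f g) (S23 (Smap Xs f g) (t1, t2, t3))) =
        S23 (Smap Xs f g) (S12 (Smap Xs f g) (t1, t2, t3))"
    unfolding tt S12_def S13_def S23_def by (simp add: L L2 L3 R1 R2)
qed

end
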